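(* Let $D$ be a strongly connected digraph with girth $g$ (having at least one cycle), $T$ a DFS tree of $D$ rooted at $r$, and $G$ the condensation graph of $D$ relative to $T$. Then $\chi_A(D)\le \chi(G)$.
   Context: Digraphs are finite and loopless; paths and cycles are directed; $l(\cdot)$ denotes length. Girth is the length of a shortest directed cycle. A DFS tree $T$ of a strongly connected digraph $D$ rooted at $r$ is the spanning out-branching produced by a depth-first search started at $r$. $P_u$ is the unique $ru$-path in $T$; the length $t$ of $T$ is the length of a longest path in $T$; the levels are $V_i=\{u: l(P_u)=i\}$, $0\le i\le t$. An arc $(u,v)$ is a backward arc if $T$ contains a $vu$-path. Let $k=\lceil\frac{t+1}{g-1}\rceil$ and $U_h=\bigcup_{j=0}^{g-2}V_{h(g-1)+j}$ for $h\in\{0,\ldots,k-1\}$, with $V_m=\emptyset$ for $m>t$. The condensation graph $G$ of $D$ relative to $T$ has vertex set $\{U_0,\ldots,U_{k-1}\}$, and for $i>j$, $U_iU_j$ is an edge iff there is a backward arc $(u,v)$ with $u\in U_i$ and $v\in U_j$. $\chi$ is the chromatic number; $\chi_A$ is the minimum number of colors in a vertex coloring whose color classes induce no directed cycle. *)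

theory Defs
  imports Complex_Main
begin

definition digraph :: "'a set \<Rightarrow> ('a \<times> 'a) set \<Rightarrow> bool" where
  "digraph V A \<longleftrightarrow> finite V \<and> A \<subseteq> V \<times> V \<and> (\<forall>v. (v, v) \<notin> A)"

definition strongly_connected :: "'a set \<Rightarrow> ('a \<times> 'a) set \<Rightarrow> bool" where
  "strongly_connected V A \<longleftrightarrow> (\<forall>u\<in>V. \<forall>v\<in>V. (u, v) \<in> A\<^sup>*)"

definition dcycle :: "('a \<times> 'a) set \<Rightarrow> 'a list \<Rightarrow> bool" where
  "dcycle A vs \<longleftrightarrow> vs \<noteq> [] \<and> distinct vs
     \<and> (\<forall>i. Suc i < length vs \<longrightarrow> (vs ! i, vs ! Suc i) \<in> A)
     \<and> (last vs, hd vs) \<in> A"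

definition girth :: "('a \<times> 'a) set \<Rightarrow> nat" where
  "girth A = (LEAST m. \<exists>vs. dcycle A vs \<and> length vs = m)"

text \<open>Depth-first search, as a nondeterministic process on states
  (stack, visited set, tree arcs).\<close>

inductive dfs_step :: "('a \<times> 'a) set \<Rightarrow> ('a list \<times> 'a set \<times> ('a \<times> 'a) set)
     \<Rightarrow> ('a list \<times> 'a set \<times> ('a \<times> 'a) set) \<Rightarrow> bool" for A where
  advance: "(u, v) \<in> A \<Longrightarrow> v \<notin> Vis \<Longrightarrow>
     dfs_step A (u # S, Vis, T) (v # u # S, insert v Vis, insert (u, v) T)"
| retreat: "(\<forall>v. (u, v) \<in> A \<longrightarrow> v \<in> Vis) \<Longrightarrow>
     dfs_step A (u # S, Vis, T) (S, Vis, T)"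

definition dfs_tree :: "'a set \<Rightarrow> ('a \<times> 'a) set \<Rightarrow> 'a \<Rightarrow> ('a \<times> 'a) set \<Rightarrow> bool" where
  "dfs_tree V A r T \<longleftrightarrow> r \<in> V \<and> (\<exists>Vis. (dfs_step A)\<^sup>*\<^sup>* ([r], {r}, {}) ([], Vis, T))"

definition depth :: "('a \<times> 'a) set \<Rightarrow> 'a \<Rightarrow> 'a \<Rightarrow> nat" where
  "depth T r u = (LEAST n. (r, u) \<in> T ^^ n)"

definition tree_length :: "'a set \<Rightarrow> ('a \<times> 'a) set \<Rightarrow> 'a \<Rightarrow> nat" where
  "tree_length V T r = Max (depth T r ` V)"

definition level :: "'a set \<Rightarrow> ('a \<times> 'a) set \<Rightarrow> 'a \<Rightarrow> nat \<Rightarrow> 'a set" where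
  "level V T r i = {u \<in> V. depth T r u = i}"

definition num_blocks :: "'a set \<Rightarrow> ('a \<times> 'a) set \<Rightarrow> 'a \<Rightarrow> nat \<Rightarrow> nat" where
  "num_blocks V T r g = nat \<lceil>real (tree_length V T r + 1) / real (g - 1)\<rceil>"

definition block :: "'a set \<Rightarrow> ('a \<times> 'a) set \<Rightarrow> 'a \<Rightarrow> nat \<Rightarrow> nat \<Rightarrow> 'a set" where
  "block V T r g h = (\<Union>j\<in>{0..g-2}. level V T r (h * (g - 1) + j))"

definition backward_arc :: "('a \<times> 'a) set \<Rightarrow> ('a \<times> 'a) set \<Rightarrow> 'a \<Rightarrow> 'a \<Rightarrow> bool" where
  "backward_arc A T u v \<longleftrightarrow> (u, v) \<in> A \<and> (v, u) \<in> T\<^sup>*"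

text \<open>Condensation graph: vertices U_0..U_(k-1) (represented by indices 0..k-1);
  for i > j, U_i U_j is an edge iff some backward arc goes from U_i to U_j.\<close>

definition cond_edge :: "'a set \<Rightarrow> ('a \<times> 'a) set \<Rightarrow> ('a \<times> 'a) set \<Rightarrow> 'a \<Rightarrow> nat \<Rightarrow> nat \<Rightarrow> nat \<Rightarrow> bool" where
  "cond_edge V A T r g i j \<longleftrightarrow> j < i \<and>
     (\<exists>u v. backward_arc A T u v \<and> u \<in> block V T r g i \<and> v \<in> block V T r g j)"

definition chromatic_number :: "'b set \<Rightarrow> ('b \<Rightarrow> 'b \<Rightarrow> bool) \<Rightarrow> nat" where
  "chromatic_number W E = (LEAST c. \<exists>f. f ` W \<subseteq> {0..<c} \<and>
      (\<forall>x\<in>W. \<forall>y\<in>W. E x y \<longrightarrow> f x \<noteq> f y))"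

definition cond_chromatic :: "'a set \<Rightarrow> ('a \<times> 'a) set \<Rightarrow> ('a \<times> 'a) set \<Rightarrow> 'a \<Rightarrow> nat \<Rightarrow> nat" where
  "cond_chromatic V A T r g =
     chromatic_number {0..<num_blocks V T r g} (cond_edge V A T r g)"

text \<open>Acyclic (dichromatic) number: fewest colours such that no directed cycle is
  monochromatic, i.e. every colour class induces an acyclic subdigraph.\<close>

definition dichromatic_number :: "'a set \<Rightarrow> ('a \<times> 'a) set \<Rightarrow> nat" where
  "dichromatic_number V A = (LEAST c. \<exists>f. f ` V \<subseteq> {0..<c} \<and>
      (\<forall>vs. dcycle A vs \<longrightarrow> \<not> (\<forall>x\<in>set vs. \<forall>y\<in>set vs. f x = f y)))"

end

theory Submission
  imports Defs
begin

definition dfs_inv :: "'a set \<Rightarrow> ('a \<times> 'a) set \<Rightarrow> 'a \<Rightarrow> ('a list \<times> 'a set \<times> ('a \<times> 'a) set) \<Rightarrow> bool" where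
 "dfs_inv V A r st = (case st of (S, Vis, T) \<Rightarrow>
   r \<in> Vis \<and> Vis \<subseteq> V \<and> set S \<subseteq> Vis \<and> distinct S \<and> T \<subseteq> A \<and>
   (\<forall>w\<in>Vis. (r,w) \<in> T\<^sup>*) \<and>
   (\<forall>x y. (x,y) \<in> T \<longrightarrow> y \<in> Vis \<and> y \<noteq> r) \<and>
   (\<forall>x x' y. (x,y) \<in> T \<longrightarrow> (x',y) \<in> T \<longrightarrow> x = x') \<and>
   sorted_wrt (\<lambda>a b. (b,a) \<in> T\<^sup>*) S \<and>
   (\<exists>rank::'a\<Rightarrow>nat. \<exists>N. \<forall>w \<in> Vis - set S. rank w < N \<and>
      (\<forall>v. (w,v) \<in> A \<longrightarrow> v \<in> Vis \<and> ((v,w) \<in> T\<^sup>* \<or> (v \<notin> set S \<and> rank v < rank w)))))"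

lemma dfs_inv_step:
  assumes "dfs_step A s s'" "dfs_inv V A r s" "A \<subseteq> V \<times> V" "\<forall>v. (v,v) \<notin> A"
  shows "dfs_inv V A r s'"
  using assms(1)
proof cases
  case (advance u v Vis S T)
  from assms(2) advance have I: "r \<in> Vis" "Vis \<subseteq> V" "set (u#S) \<subseteq> Vis" "distinct (u#S)" "T \<subseteq> A"
    "\<forall>w\<in>Vis. (r,w) \<in> T\<^sup>*" "\<forall>x y. (x,y) \<in> T \<longrightarrow> y \<in> Vis \<and> y \<noteq> r"
    "\<forall>x x' y. (x,y) \<in> T \<longrightarrow> (x',y) \<in> T \<longrightarrow> x = x'"
    "sorted_wrt (\<lambda>a b. (b,a) \<in> T\<^sup>*) (u#S)"
    unfolding dfs_inv_def by auto
  from assms(2) advance obtain rank :: "'a \<Rightarrow> nat" and N :: nat where R: "\<forall>w \<in> Vis - set (u#S). rank w < N \<and>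
      (\<forall>v. (w,v) \<in> A \<longrightarrow> v \<in> Vis \<and> ((v,w) \<in> T\<^sup>* \<or> (v \<notin> set (u#S) \<and> rank v < rank w)))"
    unfolding dfs_inv_def by auto
  let ?T = "insert (u,v) T"
  have mono: "T\<^sup>* \<subseteq> ?T\<^sup>*" by (rule rtrancl_mono) auto
  have uv: "(u,v) \<in> ?T\<^sup>*" by auto
  have vV: "v \<in> V" using advance(3) assms(3) by auto
  have s1: "sorted_wrt (\<lambda>a b. (b,a) \<in> ?T\<^sup>*) (u#S)"
    by (rule sorted_wrt_mono_rel[OF _ I(9)]) (use mono in auto)
  have s2: "\<forall>y\<in>set (u#S). (y,v) \<in> ?T\<^sup>*"
  proof
    fix y assume "y \<in> set (u#S)"
    then have "(y,u) \<in> ?T\<^sup>*" using s1 by auto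
    then show "(y,v) \<in> ?T\<^sup>*" using uv by (meson rtrancl_trans)
  qed
  have reach: "\<forall>w\<in>insert v Vis. (r,w) \<in> ?T\<^sup>*"
  proof
    fix w assume "w \<in> insert v Vis"
    moreover have "(r,u) \<in> ?T\<^sup>*" using I(3) I(6) mono by auto
    ultimately show "(r,w) \<in> ?T\<^sup>*" using I(6) mono uv by (auto intro: rtrancl_trans)
  qed
  have fin: "insert v Vis - set (v#u#S) = Vis - set (u#S)" using advance(4) by auto
  have R': "\<forall>w \<in> insert v Vis - set (v#u#S). rank w < N \<and>
      (\<forall>v'. (w,v') \<in> A \<longrightarrow> v' \<in> insert v Vis \<and> ((v',w) \<in> ?T\<^sup>* \<or> (v' \<notin> set (v#u#S) \<and> rank v' < rank w)))"
    unfolding fin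
  proof (intro ballI)
    fix w assume w: "w \<in> Vis - set (u#S)"
    have "\<forall>v'. (w,v') \<in> A \<longrightarrow> v' \<in> insert v Vis \<and> ((v',w) \<in> ?T\<^sup>* \<or> (v' \<notin> set (v#u#S) \<and> rank v' < rank w))"
    proof (intro allI impI)
      fix v' assume wv: "(w,v') \<in> A"
      from R w wv have h: "v' \<in> Vis \<and> ((v',w) \<in> T\<^sup>* \<or> (v' \<notin> set (u#S) \<and> rank v' < rank w))"
        by blast
      then have "v' \<noteq> v" using advance(4) by blast
      then show "v' \<in> insert v Vis \<and> ((v',w) \<in> ?T\<^sup>* \<or> (v' \<notin> set (v#u#S) \<and> rank v' < rank w))"
        using h mono by auto
    qed
    then show "rank w < N \<and> (\<forall>v'. (w,v') \<in> A \<longrightarrow> v' \<in> insert v Vis \<and> ((v',w) \<in> ?T\<^sup>* \<or> (v' \<notin> set (v#u#S) \<and> rank v' < rank w)))"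
      using R w by blast
  qed
  have EX: "\<exists>rank::'a\<Rightarrow>nat. \<exists>N::nat. \<forall>w \<in> insert v Vis - set (v#u#S). rank w < N \<and>
      (\<forall>v'. (w,v') \<in> A \<longrightarrow> v' \<in> insert v Vis \<and> ((v',w) \<in> ?T\<^sup>* \<or> (v' \<notin> set (v#u#S) \<and> rank v' < rank w)))"
    using R' by blast
  show ?thesis unfolding advance dfs_inv_def prod.case
    apply (intro conjI)
    prefer 10 apply (rule EX)
    using I advance(3,4) vV s1 s2 reach by auto
next
  case (retreat u Vis S T)
  from assms(2) retreat have I: "r \<in> Vis" "Vis \<subseteq> V" "set (u#S) \<subseteq> Vis" "distinct (u#S)" "T \<subseteq> A"
    "\<forall>w\<in>Vis. (r,w) \<in> T\<^sup>*" "\<forall>x y. (x,y) \<in> T \<longrightarrow> y \<in> Vis \<and> y \<noteq> r"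
    "\<forall>x x' y. (x,y) \<in> T \<longrightarrow> (x',y) \<in> T \<longrightarrow> x = x'"
    "sorted_wrt (\<lambda>a b. (b,a) \<in> T\<^sup>*) (u#S)"
    unfolding dfs_inv_def by auto
  from assms(2) retreat obtain rank :: "'a \<Rightarrow> nat" and N :: nat where R: "\<forall>w \<in> Vis - set (u#S). rank w < N \<and>
      (\<forall>v. (w,v) \<in> A \<longrightarrow> v \<in> Vis \<and> ((v,w) \<in> T\<^sup>* \<or> (v \<notin> set (u#S) \<and> rank v < rank w)))"
    unfolding dfs_inv_def by auto
  let ?rank = "rank(u := N)"
  have R': "\<forall>w \<in> Vis - set S. ?rank w < Suc N \<and>
      (\<forall>v. (w,v) \<in> A \<longrightarrow> v \<in> Vis \<and> ((v,w) \<in> T\<^sup>* \<or> (v \<notin> set S \<and> ?rank v < ?rank w)))"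
  proof
    fix w assume w: "w \<in> Vis - set S"
    show "?rank w < Suc N \<and>
      (\<forall>v. (w,v) \<in> A \<longrightarrow> v \<in> Vis \<and> ((v,w) \<in> T\<^sup>* \<or> (v \<notin> set S \<and> ?rank v < ?rank w)))"
    proof (cases "w = u")
      case True
      have "\<forall>v. (u,v) \<in> A \<longrightarrow> v \<in> Vis \<and> ((v,u) \<in> T\<^sup>* \<or> (v \<notin> set S \<and> ?rank v < ?rank u))"
      proof (intro allI impI)
        fix v assume uv: "(u,v) \<in> A"
        have vVis: "v \<in> Vis" using retreat(3) uv by auto
        have vu: "v \<noteq> u" using uv assms(4) by auto
        show "v \<in> Vis \<and> ((v,u) \<in> T\<^sup>* \<or> (v \<notin> set S \<and> ?rank v < ?rank u))"
        proof (cases "v \<in> set S")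
          case True then show ?thesis using I(9) vVis by auto
        next
          case False
          have "v \<in> Vis - set (u#S)" using False vVis vu by auto
          then have "rank v < N" using R by blast
          then show ?thesis using False vVis vu by simp
        qed
      qed
      then show ?thesis using True by auto
    next
      case False
      then have w': "w \<in> Vis - set (u#S)" using w by auto
      have "\<forall>v. (w,v) \<in> A \<longrightarrow> v \<in> Vis \<and> ((v,w) \<in> T\<^sup>* \<or> (v \<notin> set S \<and> ?rank v < ?rank w))"
      proof (intro allI impI)
        fix v assume wv: "(w,v) \<in> A"
        then have h: "v \<in> Vis \<and> ((v,w) \<in> T\<^sup>* \<or> (v \<notin> set (u#S) \<and> rank v < rank w))"
          using R w' by blast
        show "v \<in> Vis \<and> ((v,w) \<in> T\<^sup>* \<or> (v \<notin> set S \<and> ?rank v < ?rank w))"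
          using h False by auto
      qed
      moreover have "rank w < N" using R w' by blast
      then have "?rank w < Suc N" using False by simp
      ultimately show ?thesis by blast
    qed
  qed
  have EX: "\<exists>rank::'a\<Rightarrow>nat. \<exists>N::nat. \<forall>w \<in> Vis - set S. rank w < N \<and>
      (\<forall>v. (w,v) \<in> A \<longrightarrow> v \<in> Vis \<and> ((v,w) \<in> T\<^sup>* \<or> (v \<notin> set S \<and> rank v < rank w)))"
    using R' by blast
  have s: "sorted_wrt (\<lambda>a b. (b,a) \<in> T\<^sup>*) S" using I(9) by simp
  show ?thesis unfolding retreat dfs_inv_def prod.case
    apply (intro conjI)
    prefer 10 apply (rule EX)
    using I s by auto
qed

lemma dfs_inv_run:
  assumes "(dfs_step A)\<^sup>*\<^sup>* s s'" "dfs_inv V A r s" "A \<subseteq> V \<times> V" "\<forall>v. (v,v) \<notin> A"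
  shows "dfs_inv V A r s'"
  using assms(1,2)
proof (induction rule: rtranclp_induct)
  case (step y z) then show ?case using dfs_inv_step[OF step(2) _ assms(3,4)] by blast
qed simp

lemma relpow_unique:
  assumes "\<forall>x y. (x,y)\<in>T \<longrightarrow> y\<noteq>r" "\<forall>x x' y. (x,y)\<in>T \<longrightarrow> (x',y)\<in>T \<longrightarrow> x=x'"
  shows "(r,y) \<in> T^^m \<Longrightarrow> (r,y) \<in> T^^m' \<Longrightarrow> m = m'"
proof (induction m arbitrary: y m')
  case 0 then have "y = r" by simp
  then show ?case using 0 assms(1) by (cases m') auto
next
  case (Suc k)
  note IH = Suc.IH and pr = Suc.prems
  from pr(1) obtain z where z: "(r,z) \<in> T^^k" "(z,y) \<in> T" by auto
  show ?case
  proof (cases m')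
    case 0 then show ?thesis using pr z assms(1) by auto
  next
    case (Suc k')
    then obtain z' where z': "(r,z') \<in> T^^k'" "(z',y)\<in>T" using pr(2) by auto
    then have "z' = z" using z assms(2) by blast
    then show ?thesis using IH z z' Suc by auto
  qed
qed

lemma depth_eq:
  assumes "\<forall>x y. (x,y)\<in>T \<longrightarrow> y\<noteq>r" "\<forall>x x' y. (x,y)\<in>T \<longrightarrow> (x',y)\<in>T \<longrightarrow> x=x'"
    and "(r,u) \<in> T^^m"
  shows "depth T r u = m"
  unfolding depth_def
  by (rule Least_equality) (use assms relpow_unique[OF assms(1,2)] in \<open>auto, metis order_refl\<close>)

lemma relpow_sub: "(T::('a\<times>'a) set) \<subseteq> A \<Longrightarrow> (x,y) \<in> T^^n \<Longrightarrow> (x,y) \<in> A^^n"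
proof (induction n arbitrary: y)
  case (Suc n)
  then obtain z where "(x,z) \<in> T^^n" "(z,y) \<in> T" by auto
  then show ?case using Suc by auto
qed simp

lemma walk_list:
  "(x,y) \<in> A^^Suc m \<Longrightarrow> \<exists>vs. length vs = Suc m \<and> hd vs = x \<and>
     (\<forall>i. Suc i < length vs \<longrightarrow> (vs!i, vs!Suc i) \<in> A) \<and> (last vs, y) \<in> A"
proof (induction m arbitrary: x)
  case 0 then show ?case by (intro exI[of _ "[x]"]) auto
next
  case (Suc m)
  from relpow_Suc_D2[OF Suc.prems] obtain z where z: "(x,z) \<in> A" "(z,y) \<in> A^^Suc m" by blast
  from Suc.IH[OF z(2)] obtain ws where ws: "length ws = Suc m" "hd ws = z"
    "\<forall>i. Suc i < length ws \<longrightarrow> (ws!i, ws!Suc i) \<in> A" "(last ws, y) \<in> A" by blast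
  have "\<forall>i. Suc i < length (x#ws) \<longrightarrow> ((x#ws)!i, (x#ws)!Suc i) \<in> A"
  proof (intro allI impI)
    fix i assume i: "Suc i < length (x#ws)"
    show "((x#ws)!i, (x#ws)!Suc i) \<in> A"
    proof (cases i)
      case 0 then show ?thesis using ws z by (cases ws) auto
    next
      case (Suc j) then show ?thesis using ws i by auto
    qed
  qed
  then show ?case using ws by (intro exI[of _ "x#ws"]) auto
qed

lemma closed_walk_cycle:
  "vs \<noteq> [] \<Longrightarrow> (\<forall>i. Suc i < length vs \<longrightarrow> (vs!i, vs!Suc i) \<in> A) \<Longrightarrow> (last vs, hd vs) \<in> A
   \<Longrightarrow> \<exists>cs. dcycle A cs \<and> length cs \<le> length vs"
proof (induction "length vs" arbitrary: vs rule: less_induct)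
  case less
  show ?case
  proof (cases "distinct vs")
    case True then show ?thesis using less.prems unfolding dcycle_def by blast
  next
    case False
    then obtain i j where ij: "i < length vs" "j < length vs" "i \<noteq> j" "vs!i = vs!j"
      by (auto simp: distinct_conv_nth)
    then obtain i j where ij: "i < j" "j < length vs" "vs!i = vs!j"
      by (metis linorder_neqE_nat)
    define ws where "ws = take (j-i) (drop i vs)"
    have lw: "length ws = j - i" using ij by (simp add: ws_def)
    have wn: "\<And>k. k < j - i \<Longrightarrow> ws!k = vs!(i+k)" using ij by (simp add: ws_def)
    have ne: "ws \<noteq> []" using lw ij by auto
    have ch: "\<forall>k. Suc k < length ws \<longrightarrow> (ws!k, ws!Suc k) \<in> A"
    proof (intro allI impI)
      fix k assume "Suc k < length ws"
      then have k1: "Suc k < j - i" using lw by simp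
      have "(vs!(i+k), vs!Suc (i+k)) \<in> A" using less.prems(2) k1 ij by auto
      then show "(ws!k, ws!Suc k) \<in> A" using wn[of k] wn[of "Suc k"] k1 by simp
    qed
    have "last ws = vs!(j - 1)" using ne lw wn ij by (simp add: last_conv_nth)
    moreover have "hd ws = vs!j" using ne lw wn ij by (simp add: hd_conv_nth)
    moreover have "(vs!(j-1), vs!j) \<in> A" using less.prems(2) ij
      by (metis Suc_diff_1 gr_implies_not0 not_gr_zero)
    ultimately have cl: "(last ws, hd ws) \<in> A" by simp
    have "length ws < length vs" using lw ij by auto
    from less.hyps[OF this ne ch cl] show ?thesis using \<open>length ws < length vs\<close> by auto
  qed
qed

lemma rank_cycle:
  assumes "dcycle A vs" "\<forall>x\<in>set vs. \<forall>y\<in>set vs. (x,y) \<in> A \<longrightarrow> (rank::'a\<Rightarrow>nat) y < rank x"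
  shows False
proof -
  have ne: "vs \<noteq> []" and ch: "\<forall>i. Suc i < length vs \<longrightarrow> (vs!i, vs!Suc i) \<in> A"
    and cl: "(last vs, hd vs) \<in> A" using assms(1) by (auto simp: dcycle_def)
  have le: "i < length vs \<Longrightarrow> rank (vs!i) \<le> rank (vs!0)" for i
  proof (induction i)
    case (Suc i)
    then have "rank (vs!Suc i) < rank (vs!i)" using ch assms(2) by auto
    then show ?case using Suc by auto
  qed simp
  have "rank (hd vs) < rank (last vs)" using cl assms(2) ne by auto
  moreover have "rank (last vs) \<le> rank (hd vs)" using le[of "length vs - 1"] ne
    by (simp add: last_conv_nth hd_conv_nth)
  ultimately show False by simp
qed

lemma dcycle_V: "dcycle A vs \<Longrightarrow> A \<subseteq> V \<times> V \<Longrightarrow> set vs \<subseteq> V"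
proof
  fix x assume d: "dcycle A vs" and AV: "A \<subseteq> V \<times> V" and x: "x \<in> set vs"
  then obtain i where i: "i < length vs" "x = vs!i" by (auto simp: in_set_conv_nth)
  show "x \<in> V"
  proof (cases "Suc i < length vs")
    case True then show ?thesis using d AV i unfolding dcycle_def by blast
  next
    case False
    then have "i = length vs - 1" using i by linarith
    moreover have "vs \<noteq> []" using i by auto
    ultimately have "x = last vs" using i by (simp add: last_conv_nth)
    then show ?thesis using d AV unfolding dcycle_def by blast
  qed
qed

theorem mainTheorem18:
  fixes V :: "'a set" and A :: "('a \<times> 'a) set" and r :: 'a and T :: "('a \<times> 'a) set"
  assumes "digraph V A"
    and "strongly_connected V A"
    and "\<exists>vs. dcycle A vs"
    and "g = girth A"
    and "dfs_tree V A r T"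
  shows "dichromatic_number V A \<le> cond_chromatic V A T r g"
proof -
  have dg: "finite V" "A \<subseteq> V \<times> V" "\<forall>v. (v,v) \<notin> A" using assms(1) by (auto simp: digraph_def)
  obtain Vis where run: "(dfs_step A)\<^sup>*\<^sup>* ([r],{r},{}) ([],Vis,T)" and rV: "r \<in> V"
    using assms(5) by (auto simp: dfs_tree_def)
  have inv0: "dfs_inv V A r ([r],{r},{})" using rV by (auto simp: dfs_inv_def)
  have inv: "dfs_inv V A r ([],Vis,T)" by (rule dfs_inv_run[OF run inv0 dg(2,3)])
  have VisV: "Vis \<subseteq> V" and TA: "T \<subseteq> A" and rVis: "r \<in> Vis"
    and reach: "\<forall>w\<in>Vis. (r,w) \<in> T\<^sup>*" and into: "\<forall>x y. (x,y)\<in>T \<longrightarrow> y\<noteq>r"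
    and un: "\<forall>x x' y. (x,y)\<in>T \<longrightarrow> (x',y)\<in>T \<longrightarrow> x=x'"
    using inv by (auto simp: dfs_inv_def)
  have "\<exists>rank::'a\<Rightarrow>nat. \<exists>N::nat. \<forall>w \<in> Vis - set []. rank w < N \<and>
      (\<forall>v. (w,v) \<in> A \<longrightarrow> v \<in> Vis \<and> ((v,w) \<in> T\<^sup>* \<or> (v \<notin> set [] \<and> rank v < rank w)))"
    using inv unfolding dfs_inv_def by simp
  then obtain rank :: "'a \<Rightarrow> nat" and N :: nat where
    rk0: "\<forall>w \<in> Vis - set []. rank w < N \<and>
      (\<forall>v. (w,v) \<in> A \<longrightarrow> v \<in> Vis \<and> ((v,w) \<in> T\<^sup>* \<or> (v \<notin> set [] \<and> rank v < rank w)))"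
    by blast
  have rk: "\<forall>w\<in>Vis. \<forall>v. (w,v) \<in> A \<longrightarrow> v \<in> Vis \<and> ((v,w) \<in> T\<^sup>* \<or> rank v < rank w)"
    using rk0 by simp
  have "V \<subseteq> Vis"
  proof
    fix x assume "x \<in> V"
    then have "(r,x) \<in> A\<^sup>*" using assms(2) rV by (auto simp: strongly_connected_def)
    then show "x \<in> Vis" by induction (use rVis rk in auto)
  qed
  with VisV have VV: "Vis = V" by auto
  have g2: "2 \<le> g"
  proof -
    obtain cs where cs: "dcycle A cs" "length cs = girth A"
      using LeastI_ex[of "\<lambda>m. \<exists>vs. dcycle A vs \<and> length vs = m"] assms(3) unfolding girth_def by blast
    have "length cs \<noteq> 0" using cs(1) unfolding dcycle_def by auto
    moreover have "length cs \<noteq> 1"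
    proof
      assume "length cs = 1"
      then obtain a where "cs = [a]" by (cases cs) auto
      then show False using cs(1) dg(3) unfolding dcycle_def by auto
    qed
    ultimately show ?thesis using cs assms(4) by linarith
  qed
  define q where "q = g - 1"
  have q0: "0 < q" using g2 q_def by auto
  have bkarc: "depth T r y + q \<le> depth T r x" if xy: "(x,y) \<in> A" "(y,x) \<in> T\<^sup>*" for x y
  proof -
    have yV: "y \<in> V" using xy dg(2) by auto
    obtain n where n: "(y,x) \<in> T^^n" using xy(2) unfolding rtrancl_power by blast
    have "(r,y) \<in> T\<^sup>*" using reach yV VV by blast
    then obtain m where m: "(r,y) \<in> T^^m" unfolding rtrancl_power by blast
    have "(r,x) \<in> T^^(m+n)" unfolding relpow_add using m n by (rule relcompI)
    then have dx: "depth T r x = m + n" by (rule depth_eq[OF into un])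
    have dy: "depth T r y = m" using m by (rule depth_eq[OF into un])
    have "(x,x) \<in> A^^Suc n" using relpow_Suc_I2[OF xy(1) relpow_sub[OF TA n]] .
    then obtain vs where vs: "length vs = Suc n" "hd vs = x"
      "\<forall>i. Suc i < length vs \<longrightarrow> (vs!i, vs!Suc i) \<in> A" "(last vs, x) \<in> A"
      using walk_list[where A=A and x=x and y=x and m=n] by blast
    have "vs \<noteq> []" using vs(1) by auto
    then obtain cs where cs: "dcycle A cs" "length cs \<le> Suc n"
      using closed_walk_cycle[of vs A] vs by auto
    have "girth A \<le> length cs" unfolding girth_def by (rule Least_le) (use cs in blast)
    then have "g \<le> Suc n" using cs assms(4) by simp
    then show ?thesis using dx dy q_def by auto
  qed
  have inblock: "x \<in> block V T r g (depth T r x div q)" if "x \<in> V" for x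
  proof -
    have "depth T r x mod q < q" by (rule mod_less_divisor[OF q0])
    then have "depth T r x mod q \<le> g - 2" using q_def g2 by linarith
    then have "depth T r x mod q \<in> {0..g-2}" by simp
    moreover have "depth T r x = depth T r x div q * q + depth T r x mod q"
      by simp
    then have "depth T r x = depth T r x div q * (g - 1) + depth T r x mod q"
      unfolding q_def .
    ultimately show ?thesis unfolding block_def level_def
      by (intro UN_I[of "depth T r x mod q"]) (use that in auto)
  qed
  have blockeq: "h = depth T r x div q" if hx: "x \<in> block V T r g h" for x h
  proof -
    obtain j where j: "j \<le> g - 2" "depth T r x = h * q + j"
      using hx unfolding block_def level_def q_def by auto
    have "j < q" using j(1) q_def g2 by auto
    then show ?thesis using j(2) q0 by simp
  qed
  define k where "k = num_blocks V T r g"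
  have bk: "depth T r x div q < k" if "x \<in> V" for x
  proof -
    define t where "t = tree_length V T r"
    have dt: "depth T r x \<le> t" unfolding t_def tree_length_def
      using Max_ge[OF finite_imageI[OF dg(1)]] that by blast
    have "depth T r x div q * q \<le> depth T r x" by simp
    then have "real (depth T r x div q) * real q < real (t + 1)" using dt
      by (metis of_nat_less_iff of_nat_mult le_imp_less_Suc Suc_eq_plus1 order_le_less_trans)
    then have "real (depth T r x div q) < real (t + 1) / real (g - 1)"
      using q0 q_def by (simp add: pos_less_divide_eq)
    also have "\<dots> \<le> of_int \<lceil>real (t + 1) / real (g - 1)\<rceil>" by (rule le_of_int_ceiling)
    finally have "int (depth T r x div q) < \<lceil>real (t + 1) / real (g - 1)\<rceil>"
      by (metis of_int_less_iff of_int_of_nat_eq)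
    then show ?thesis unfolding k_def num_blocks_def t_def by linarith
  qed
  let ?P = "\<lambda>c::nat. \<exists>f::nat\<Rightarrow>nat. f ` {0..<k} \<subseteq> {0..<c} \<and>
      (\<forall>x\<in>{0..<k}. \<forall>y\<in>{0..<k}. cond_edge V A T r g x y \<longrightarrow> f x \<noteq> f y)"
  have exP: "\<exists>c. ?P c"
  proof
    show "?P k"
    proof
      show "id ` {0..<k} \<subseteq> {0..<k} \<and>
        (\<forall>x\<in>{0..<k}. \<forall>y\<in>{0..<k}. cond_edge V A T r g x y \<longrightarrow> id x \<noteq> id y)"
        by (auto simp: cond_edge_def)
    qed
  qed
  obtain f where f: "f ` {0..<k} \<subseteq> {0..<cond_chromatic V A T r g}"
    "\<forall>x\<in>{0..<k}. \<forall>y\<in>{0..<k}. cond_edge V A T r g x y \<longrightarrow> f x \<noteq> f y"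
    using LeastI_ex[OF exP] unfolding cond_chromatic_def chromatic_number_def k_def by blast
  define F where "F x = f (depth T r x div q)" for x
  have FV: "F ` V \<subseteq> {0..<cond_chromatic V A T r g}" using f(1) bk unfolding F_def by fastforce
  have nomono: "\<not> (\<forall>x\<in>set vs. \<forall>y\<in>set vs. F x = F y)" if d: "dcycle A vs" for vs
  proof
    assume mono: "\<forall>x\<in>set vs. \<forall>y\<in>set vs. F x = F y"
    have sv: "set vs \<subseteq> V" using dcycle_V[OF d dg(2)] .
    have "\<forall>x\<in>set vs. \<forall>y\<in>set vs. (x,y) \<in> A \<longrightarrow> rank y < rank x"
    proof (intro ballI impI)
      fix x y assume x: "x \<in> set vs" and y: "y \<in> set vs" and xy: "(x,y) \<in> A"
      have "(y,x) \<notin> T\<^sup>*"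
      proof
        assume yx: "(y,x) \<in> T\<^sup>*"
        have b: "depth T r y + q \<le> depth T r x" using bkarc[OF xy yx] .
        have "depth T r y div q < depth T r x div q"
        proof -
          have "(depth T r y + q) div q \<le> depth T r x div q" using b by (rule div_le_mono)
          then show ?thesis using q0 by simp
        qed
        moreover have "cond_edge V A T r g (depth T r x div q) (depth T r y div q)"
          unfolding cond_edge_def backward_arc_def using calculation xy yx inblock x y sv by blast
        moreover have "depth T r x div q \<in> {0..<k}" using bk x sv by auto
        moreover have "depth T r y div q \<in> {0..<k}" using bk y sv by auto
        ultimately have "F x \<noteq> F y" using f(2) unfolding F_def by blast
        then show False using mono x y by blast
      qed
      then show "rank y < rank x" using rk x xy sv VV by blast
    qed
    then show False using rank_cycle[OF d] by blast
  qed
  show ?thesis unfolding dichromatic_number_def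
    by (rule Least_le) (use FV nomono in blast)
qed

end
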